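(* Assume (RHS.1), (RHS.2), (BC.1), (BC.2), and, if (RHS.2b) holds, condition (M.1). Let $u^0_{\mathfrak h}\in\mathbb V_h$ be any function with $u^0_{\mathfrak h}(z)=\tilde g_\varepsilon(z)$ for all $z\in\mathcal N_h^b$, and define $u^{n+1}_{\mathfrak h}\in\mathbb V_h$ for $n\ge0$ by $$u^{n+1}_{\mathfrak h}(z)=\tfrac12\Big[\varepsilon^2f(z)+\max_{x\in\mathcal N_{\mathfrak h}(z)}u^n_{\mathfrak h}(x)+\min_{x\in\mathcal N_{\mathfrak h}(z)}u^n_{\mathfrak h}(x)\Big]\ \ (z\in\mathcal N_h^I),\qquad u^{n+1}_{\mathfrak h}(z)=\tilde g_\varepsilon(z)\ \ (z\in\mathcal N_h^b).$$ Then the sequence $\{u^n_{\mathfrak h}\}_{n\ge0}$ converges to $u_{\mathfrak h}$, the solution of the discrete problem.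
   Context: Setting: $\Omega\subset\mathbb R^d$ ($d\ge1$) is a bounded domain with continuous boundary. For $r>0$, $\Omega^{(r)}=\{x\in\Omega:\operatorname{dist}(x,\partial\Omega)>r\}$. $\mathcal T_h$ is a mesh of closed simplices, $h=\max_T\operatorname{diam}T$, $\Omega_h$ the interior of the union of the simplices, with $\Omega^{(h)}\subset\Omega_h\subset\Omega$; $\mathcal N_h$ the set of vertices. $\mathbb V_h$: continuous piecewise linear functions on $\mathcal T_h$ (determined by nodal values), hat basis $\{\hat\varphi_z\}$, Lagrange interpolant $\mathcal I_h$. Parameters $\mathfrak h=(h,\varepsilon,\theta)$, $\varepsilon\in[h,\operatorname{diam}\Omega]$, $0<\theta\le1$. $\mathcal N_h^I=\mathcal N_h\cap\Omega^{(2\varepsilon)}$, $\mathcal N_h^b=\mathcal N_h\setminus\mathcal N_h^I$. $\mathbb S_\theta$: finite symmetric subset of the unit sphere $\mathbb S$ such that each $v\in\mathbb S$ has $v_\theta\in\mathbb S_\theta$ with $|v-v_\theta|\le\theta$. For $z\in\mathcal N_h^I$, $\mathcal N_{\mathfrak h}(z)=\{z\}\cup\{z+\varepsilon v_\theta:v_\theta\in\mathbb S_\theta\}$, $-\Delta^\diamond_{\infty,\mathfrak h}w(z)=\varepsilon^{-2}\big(2w(z)-\max_{x\in\mathcal N_{\mathfrak h}(z)}\mathcal I_hw(x)-\min_{x\in\mathcal N_{\mathfrak h}(z)}\mathcal I_hw(x)\big)$, $\widetilde{\mathcal N}_{\mathfrak h}(z)=\{z\}\cup\{z'\in\mathcal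 N_h:\exists v_\theta\in\mathbb S_\theta,\ \hat\varphi_{z'}(z+\varepsilon v_\theta)>0\}$. Assumptions: (RHS.1) $f\in C(\Omega)\cap L^\infty(\Omega)$. (RHS.2) either (RHS.2a) $\sup_\Omega f<0$ or $\inf_\Omega f>0$, or (RHS.2b) $f\equiv0$. (BC.1) $g\in C(\partial\Omega)$. (BC.2) for every $\varepsilon>0$ a function $\tilde g_\varepsilon\in C(\overline\Omega)$ approximating $g$ is given (with $\tilde g_\varepsilon\in C^{0,\alpha}(\overline\Omega)$ and $\|g-\tilde g_\varepsilon\|_{L^\infty(\partial\Omega)}\le C\varepsilon^\alpha$ whenever $g\in C^{0,\alpha}(\partial\Omega)$, $\alpha\in[0,1]$). (M.1) for every nonempty $S\subset\mathcal N_h^I$ there are $z\in S$, $z'\in\mathcal N_h\setminus S$ with $z'\in\widetilde{\mathcal N}_{\mathfrak h}(z)$. Discrete problem: find $u_{\mathfrak h}\in\mathbb V_h$ with $-\Delta^\diamond_{\infty,\mathfrak h}u_{\mathfrak h}(z)=f(z)$ for $z\in\mathcal N_h^I$ and $u_{\mathfrak h}(z)=\tilde g_\varepsilon(z)$ for $z\in\mathcal N_h^b$. *)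

theory Defs
  imports "HOL-Analysis.Analysis"
begin

definition inner_set :: "'a::euclidean_space set \<Rightarrow> real \<Rightarrow> 'a set" where
  "inner_set \<Omega> r = {x \<in> \<Omega>. infdist x (frontier \<Omega>) > r}"

definition continuous_boundary :: "'a::euclidean_space set \<Rightarrow> bool" where
  "continuous_boundary \<Omega> \<longleftrightarrow>
     (\<forall>x\<in>frontier \<Omega>. \<exists>e U (\<phi>::'a \<Rightarrow> real).
        norm e = 1 \<and> open U \<and> x \<in> U \<and> continuous_on UNIV \<phi> \<and>
        (\<forall>y t. \<phi> (y + t *\<^sub>R e) = \<phi> y) \<and>
        \<Omega> \<inter> U = {y \<in> U. y \<bullet> e < \<phi> y})"

(* a (closed, nondegenerate) simplex is given by its set of vertices *)
definition simplex_vertices :: "'a::euclidean_space set \<Rightarrow> bool" where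
  "simplex_vertices T \<longleftrightarrow> finite T \<and> card T = DIM('a) + 1 \<and> \<not> affine_dependent T"

definition conforming_mesh :: "'a::euclidean_space set set \<Rightarrow> bool" where
  "conforming_mesh M \<longleftrightarrow> finite M \<and> M \<noteq> {} \<and> (\<forall>T\<in>M. simplex_vertices T) \<and>
     (\<forall>T1\<in>M. \<forall>T2\<in>M. convex hull T1 \<inter> convex hull T2 = convex hull (T1 \<inter> T2))"

definition mesh_size :: "'a::euclidean_space set set \<Rightarrow> real" where
  "mesh_size M = Max ((\<lambda>T. diameter (convex hull T)) ` M)"

definition mesh_union :: "'a::euclidean_space set set \<Rightarrow> 'a set" where
  "mesh_union M = (\<Union>T\<in>M. convex hull T)"

definition mesh_domain :: "'a::euclidean_space set set \<Rightarrow> 'a set" where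
  "mesh_domain M = interior (mesh_union M)"

definition mesh_nodes :: "'a::euclidean_space set set \<Rightarrow> 'a set" where
  "mesh_nodes M = \<Union> M"

(* V_h: continuous piecewise linear functions (affine on each simplex);
   extended by 0 outside the triangulated region so that they are determined
   by their nodal values *)
definition P1 :: "'a::euclidean_space set set \<Rightarrow> ('a \<Rightarrow> real) set" where
  "P1 M = {w. continuous_on (mesh_union M) w \<and>
              (\<forall>T\<in>M. \<exists>c b. \<forall>x\<in>convex hull T. w x = c \<bullet> x + b) \<and>
              (\<forall>x. x \<notin> mesh_union M \<longrightarrow> w x = 0)}"

definition hat :: "'a::euclidean_space set set \<Rightarrow> 'a \<Rightarrow> 'a \<Rightarrow> real" where
  "hat M z = (THE w. w \<in> P1 M \<and> (\<forall>y\<in>mesh_nodes M. w y = (if y = z then 1 else 0)))"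

definition theta_net :: "'a::euclidean_space set \<Rightarrow> real \<Rightarrow> bool" where
  "theta_net S \<theta> \<longleftrightarrow> finite S \<and> S \<subseteq> sphere 0 1 \<and> (\<forall>v\<in>S. - v \<in> S) \<and>
     (\<forall>v\<in>sphere 0 1. \<exists>vt\<in>S. norm (v - vt) \<le> \<theta>)"

definition stencil :: "real \<Rightarrow> 'a::euclidean_space set \<Rightarrow> 'a \<Rightarrow> 'a set" where
  "stencil \<epsilon> S z = insert z ((\<lambda>v. z + \<epsilon> *\<^sub>R v) ` S)"

definition interior_nodes :: "'a::euclidean_space set \<Rightarrow> 'a set set \<Rightarrow> real \<Rightarrow> 'a set" where
  "interior_nodes \<Omega> M \<epsilon> = mesh_nodes M \<inter> inner_set \<Omega> (2 * \<epsilon>)"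

definition boundary_nodes :: "'a::euclidean_space set \<Rightarrow> 'a set set \<Rightarrow> real \<Rightarrow> 'a set" where
  "boundary_nodes \<Omega> M \<epsilon> = mesh_nodes M - interior_nodes \<Omega> M \<epsilon>"

(* - Delta^diamond_{infty,h} w (z), for w in V_h (so that I_h w = w) *)
definition disc_inf_lap :: "real \<Rightarrow> 'a::euclidean_space set \<Rightarrow> ('a \<Rightarrow> real) \<Rightarrow> 'a \<Rightarrow> real" where
  "disc_inf_lap \<epsilon> S w z =
     (2 * w z - Max (w ` stencil \<epsilon> S z) - Min (w ` stencil \<epsilon> S z)) / \<epsilon>\<^sup>2"

definition ext_stencil :: "'a::euclidean_space set set \<Rightarrow> real \<Rightarrow> 'a set \<Rightarrow> 'a \<Rightarrow> 'a set" where
  "ext_stencil M \<epsilon> S z =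
     insert z {z' \<in> mesh_nodes M. \<exists>v\<in>S. hat M z' (z + \<epsilon> *\<^sub>R v) > 0}"

definition cond_M1 :: "'a::euclidean_space set \<Rightarrow> 'a set set \<Rightarrow> real \<Rightarrow> 'a set \<Rightarrow> bool" where
  "cond_M1 \<Omega> M \<epsilon> S \<longleftrightarrow>
     (\<forall>S'. S' \<subseteq> interior_nodes \<Omega> M \<epsilon> \<and> S' \<noteq> {} \<longrightarrow>
        (\<exists>z\<in>S'. \<exists>z'\<in>mesh_nodes M - S'. z' \<in> ext_stencil M \<epsilon> S z))"

definition holder_on :: "real \<Rightarrow> 'a::euclidean_space set \<Rightarrow> ('a \<Rightarrow> real) \<Rightarrow> bool" where
  "holder_on \<alpha> A g \<longleftrightarrow> continuous_on A g \<and> bounded (g ` A) \<and>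
     (\<exists>L. \<forall>x\<in>A. \<forall>y\<in>A. \<bar>g x - g y\<bar> \<le> L * dist x y powr \<alpha>)"

definition discrete_solution ::
  "'a::euclidean_space set \<Rightarrow> 'a set set \<Rightarrow> real \<Rightarrow> 'a set \<Rightarrow> ('a \<Rightarrow> real) \<Rightarrow> ('a \<Rightarrow> real)
     \<Rightarrow> ('a \<Rightarrow> real) \<Rightarrow> bool" where
  "discrete_solution \<Omega> M \<epsilon> S f gt w \<longleftrightarrow>
     w \<in> P1 M \<and>
     (\<forall>z\<in>interior_nodes \<Omega> M \<epsilon>. disc_inf_lap \<epsilon> S w z = f z) \<and>
     (\<forall>z\<in>boundary_nodes \<Omega> M \<epsilon>. w z = gt z)"

end

theory Submission
  imports Defs
begin

lemma mesh_fin: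
  assumes "conforming_mesh M"
  shows "finite (mesh_nodes M)" "\<And>T. T \<in> M \<Longrightarrow> finite T"
  using assms unfolding conforming_mesh_def simplex_vertices_def mesh_nodes_def by auto

lemma affine_comb:
  fixes c :: "'a::real_inner"
  assumes "sum \<mu> X = 1"
  shows "c \<bullet> (\<Sum>x\<in>X. \<mu> x *\<^sub>R x) + b = (\<Sum>x\<in>X. \<mu> x * (c \<bullet> x + b))"
proof -
  have "(\<Sum>x\<in>X. \<mu> x * (c \<bullet> x + b)) = (\<Sum>x\<in>X. \<mu> x * (c \<bullet> x)) + (\<Sum>x\<in>X. \<mu> x) * b"
    by (simp add: distrib_left sum.distrib sum_distrib_right)
  then show ?thesis using assms by (simp add: inner_sum_right)
qed

lemma lin_functional:
  fixes g :: "'a::euclidean_space \<Rightarrow> real"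
  assumes "linear g"
  shows "\<exists>c. \<forall>x. g x = c \<bullet> x"
proof -
  have "g x = (\<Sum>i\<in>Basis. g i *\<^sub>R i) \<bullet> x" for x
  proof -
    have "g x = g (\<Sum>i\<in>Basis. (x \<bullet> i) *\<^sub>R i)" by (simp add: euclidean_representation)
    also have "\<dots> = (\<Sum>i\<in>Basis. (x \<bullet> i) * g i)"
      using assms by (simp add: linear_sum linear_scale)
    also have "\<dots> = (\<Sum>i\<in>Basis. g i *\<^sub>R i) \<bullet> x"
      by (simp add: inner_sum_right inner_commute mult.commute)
    finally show ?thesis .
  qed
  then show ?thesis by blast
qed

lemma aff_interp:
  fixes T :: "'a::euclidean_space set"
  assumes "finite T" "\<not> affine_dependent T"
  shows "\<exists>c b. \<forall>t\<in>T. c \<bullet> t + b = a t"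
proof (cases "T = {}")
  case True then show ?thesis by auto
next
  case False
  then obtain t0 where t0: "t0 \<in> T" by auto
  define T' where "T' = T - {t0}"
  have TT: "T = insert t0 T'" "t0 \<notin> T'" using t0 T'_def by auto
  have "\<not> affine_dependent (insert t0 T')" using assms(2) TT(1) by simp
  then have ind: "independent ((\<lambda>x. -t0 + x) ` T')"
    using affine_dependent_iff_dependent[OF TT(2)] by blast
  obtain g where g: "linear g" "\<forall>x\<in>(\<lambda>x. -t0 + x) ` T'. g x = a (t0 + x) - a t0"
    using linear_independent_extend[OF ind, of "\<lambda>x. a (t0 + x) - a t0"] by blast
  obtain c where c: "\<forall>x. g x = c \<bullet> x" using lin_functional[OF g(1)] by blast
  have "\<forall>t\<in>T. c \<bullet> t + (a t0 - c \<bullet> t0) = a t"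
  proof
    fix t assume "t \<in> T"
    show "c \<bullet> t + (a t0 - c \<bullet> t0) = a t"
    proof (cases "t = t0")
      case True then show ?thesis by simp
    next
      case False
      then have "t \<in> T'" using \<open>t \<in> T\<close> TT by auto
      then have "g (-t0 + t) = a t - a t0" using g(2) by auto
      then show ?thesis using c by (simp add: inner_diff_right inner_add_right)
    qed
  qed
  then show ?thesis by blast
qed

lemma weights:
  assumes cm: "conforming_mesh M"
  shows "\<exists>lam. (\<forall>n. 0 \<le> lam n) \<and> sum lam (mesh_nodes M) \<le> 1 \<and>
     ((sum lam (mesh_nodes M) = 1 \<and> y = (\<Sum>n\<in>mesh_nodes M. lam n *\<^sub>R n)) \<or> (\<forall>n. lam n = 0)) \<and>
     (\<forall>u\<in>P1 M. u y = (\<Sum>n\<in>mesh_nodes M. lam n * u n))"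
proof (cases "y \<in> mesh_union M")
  case False
  then show ?thesis by (intro exI[of _ "\<lambda>_. 0"]) (auto simp: P1_def)
next
  case True
  then obtain T where T: "T \<in> M" "y \<in> convex hull T" unfolding mesh_union_def by auto
  have fT: "finite T" using mesh_fin[OF cm] T by auto
  obtain \<mu> where mu: "\<forall>x\<in>T. 0 \<le> \<mu> x" "sum \<mu> T = 1" "(\<Sum>x\<in>T. \<mu> x *\<^sub>R x) = y"
    using T(2) convex_hull_finite[OF fT] by auto
  define lam where "lam n = (if n \<in> T then \<mu> n else 0)" for n
  have TN: "T \<subseteq> mesh_nodes M" using T unfolding mesh_nodes_def by auto
  have fN: "finite (mesh_nodes M)" using mesh_fin[OF cm] by auto
  have s1: "sum lam (mesh_nodes M) = 1"
    using sum.mono_neutral_cong_right[OF fN TN, of lam \<mu>] mu(2) unfolding lam_def by simp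
  have s2: "(\<Sum>n\<in>mesh_nodes M. lam n *\<^sub>R n) = y"
    using sum.mono_neutral_cong_right[OF fN TN, of "\<lambda>n. lam n *\<^sub>R n" "\<lambda>n. \<mu> n *\<^sub>R n"] mu(3)
    unfolding lam_def by simp
  have s3: "u y = (\<Sum>n\<in>mesh_nodes M. lam n * u n)" if "u \<in> P1 M" for u
  proof -
    have "\<exists>c b. \<forall>x\<in>convex hull T. u x = c \<bullet> x + b" using that T(1) by (auto simp: P1_def)
    then obtain c b where cb: "\<forall>x\<in>convex hull T. u x = c \<bullet> x + b" by blast
    have "u y = c \<bullet> y + b" using cb T(2) by auto
    also have "\<dots> = (\<Sum>x\<in>T. \<mu> x * (c \<bullet> x + b))" using affine_comb[OF mu(2)] mu(3) by metis
    also have "\<dots> = (\<Sum>x\<in>T. \<mu> x * u x)"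
      using cb hull_subset[of T convex] by (intro sum.cong) auto
    also have "\<dots> = (\<Sum>n\<in>mesh_nodes M. lam n * u n)"
      using sum.mono_neutral_cong_right[OF fN TN, of "\<lambda>n. lam n * u n" "\<lambda>n. \<mu> n * u n"]
      unfolding lam_def by simp
    finally show ?thesis .
  qed
  show ?thesis
  proof (intro exI[of _ lam] conjI)
    show "\<forall>n. 0 \<le> lam n" using mu(1) unfolding lam_def by simp
  qed (use s1 s2 s3 in auto)
qed

lemma interp_exists:
  assumes cm: "conforming_mesh M"
  shows "\<exists>u\<in>P1 M. \<forall>n\<in>mesh_nodes M. u n = a n"
proof -
  have "\<forall>T\<in>M. \<exists>p. \<forall>t\<in>T. fst p \<bullet> t + snd p = a t"
  proof
    fix T assume "T \<in> M"
    then have "finite T" "\<not> affine_dependent T"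
      using cm unfolding conforming_mesh_def simplex_vertices_def by auto
    then obtain c b where "\<forall>t\<in>T. c \<bullet> t + b = a t" using aff_interp by blast
    then show "\<exists>p. \<forall>t\<in>T. fst p \<bullet> t + snd p = a t" by (intro exI[of _ "(c,b)"]) auto
  qed
  then obtain p where p: "\<forall>T\<in>M. \<forall>t\<in>T. fst (p T) \<bullet> t + snd (p T) = a t" by metis
  have cons: "fst (p T1) \<bullet> y + snd (p T1) = fst (p T2) \<bullet> y + snd (p T2)"
    if "T1 \<in> M" "T2 \<in> M" "y \<in> convex hull T1" "y \<in> convex hull T2" for T1 T2 y
  proof -
    have "y \<in> convex hull (T1 \<inter> T2)"
      using cm that unfolding conforming_mesh_def by blast
    moreover have "finite (T1 \<inter> T2)" using mesh_fin[OF cm] that by auto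
    ultimately obtain \<mu> where mu: "sum \<mu> (T1 \<inter> T2) = 1" "(\<Sum>x\<in>T1 \<inter> T2. \<mu> x *\<^sub>R x) = y"
      using convex_hull_finite by blast
    have e: "fst (p T) \<bullet> y + snd (p T) = (\<Sum>x\<in>T1 \<inter> T2. \<mu> x * a x)" if "T \<in> {T1, T2}" for T
    proof -
      have "fst (p T) \<bullet> y + snd (p T) = (\<Sum>x\<in>T1 \<inter> T2. \<mu> x * (fst (p T) \<bullet> x + snd (p T)))"
        using affine_comb[OF mu(1)] mu(2) by metis
      also have "\<dots> = (\<Sum>x\<in>T1 \<inter> T2. \<mu> x * a x)"
        using p that \<open>T1 \<in> M\<close> \<open>T2 \<in> M\<close> by (intro sum.cong) auto
      finally show ?thesis .
    qed
    show ?thesis using e[of T1] e[of T2] by simp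
  qed
  define u where "u y = (if y \<in> mesh_union M then
      (let T = (SOME T. T \<in> M \<and> y \<in> convex hull T) in fst (p T) \<bullet> y + snd (p T)) else 0)" for y
  have on: "u y = fst (p T) \<bullet> y + snd (p T)" if "T \<in> M" "y \<in> convex hull T" for T y
  proof -
    have ym: "y \<in> mesh_union M" using that unfolding mesh_union_def by auto
    define T' where "T' = (SOME T. T \<in> M \<and> y \<in> convex hull T)"
    have T': "T' \<in> M \<and> y \<in> convex hull T'" unfolding T'_def by (rule someI[of _ T]) (use that in auto)
    have "u y = fst (p T') \<bullet> y + snd (p T')" unfolding u_def T'_def using ym by (simp add: Let_def)
    also have "\<dots> = fst (p T) \<bullet> y + snd (p T)" using cons[of T' T y] T' that by blast
    finally show ?thesis .
  qed
  have cont: "continuous_on (mesh_union M) u"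
    unfolding mesh_union_def
  proof (rule continuous_on_closed_Union)
    show "finite M" using cm unfolding conforming_mesh_def by auto
    fix T assume T: "T \<in> M"
    then have "finite T" using mesh_fin[OF cm] by auto
    then show "closed (convex hull T)"
      by (simp add: compact_imp_closed finite_imp_compact_convex_hull)
    have "continuous_on (convex hull T) (\<lambda>y. fst (p T) \<bullet> y + snd (p T))"
      by (intro continuous_intros)
    then show "continuous_on (convex hull T) u"
      by (rule continuous_on_eq) (use on[OF T] in simp)
  qed
  have aff: "\<forall>T\<in>M. \<exists>c b. \<forall>x\<in>convex hull T. u x = c \<bullet> x + b"
    using on by blast
  have out: "\<forall>x. x \<notin> mesh_union M \<longrightarrow> u x = 0" unfolding u_def by simp
  have "u \<in> P1 M"
    unfolding P1_def using cont aff out by blast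
  moreover have "\<forall>n\<in>mesh_nodes M. u n = a n"
  proof
    fix n assume "n \<in> mesh_nodes M"
    then obtain T where T: "T \<in> M" "n \<in> T" unfolding mesh_nodes_def by auto
    then have "u n = fst (p T) \<bullet> n + snd (p T)" using on hull_subset[of T convex] by blast
    then show "u n = a n" using p T by auto
  qed
  ultimately show ?thesis by blast
qed

lemma P1_unique:
  assumes cm: "conforming_mesh M" and "u \<in> P1 M" "v \<in> P1 M" "\<forall>n\<in>mesh_nodes M. u n = v n"
  shows "u = v"
proof
  fix y
  obtain lam where l: "\<forall>u\<in>P1 M. u y = (\<Sum>n\<in>mesh_nodes M. lam n * u n)"
    using weights[OF cm] by blast
  have "u y = (\<Sum>n\<in>mesh_nodes M. lam n * u n)" using l assms(2) by blast
  also have "\<dots> = (\<Sum>n\<in>mesh_nodes M. lam n * v n)" using assms(4) by (intro sum.cong) auto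
  also have "\<dots> = v y" using l assms(3) by metis
  finally show "u y = v y" .
qed

lemma hat_char:
  assumes cm: "conforming_mesh M"
  shows "hat M z \<in> P1 M \<and> (\<forall>y\<in>mesh_nodes M. hat M z y = (if y = z then 1 else 0))"
proof -
  obtain u where u: "u \<in> P1 M" "\<forall>n\<in>mesh_nodes M. u n = (if n = z then 1 else 0)"
    using interp_exists[OF cm, of "\<lambda>n. if n = z then 1 else 0"] by blast
  have "\<exists>!w. w \<in> P1 M \<and> (\<forall>y\<in>mesh_nodes M. w y = (if y = z then 1 else 0))"
    using u P1_unique[OF cm] by (intro ex1I[of _ u]) auto
  then show ?thesis unfolding hat_def by (rule theI')
qed

lemma Max_le_shift:
  fixes F G :: "'b \<Rightarrow> real"
  assumes "finite P" "P \<noteq> {}" "\<forall>y\<in>P. F y \<le> G y + c"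
  shows "Max (F ` P) \<le> Max (G ` P) + c"
proof -
  have "Max (F ` P) \<in> F ` P" using Max_in[of "F ` P"] assms by auto
  then obtain y0 where y0: "y0 \<in> P" "Max (F ` P) = F y0" by auto
  have "G y0 \<le> Max (G ` P)" using assms y0 by auto
  moreover have "F y0 \<le> G y0 + c" using assms y0 by auto
  ultimately show ?thesis using y0 by linarith
qed

lemma Min_le_shift:
  fixes F G :: "'b \<Rightarrow> real"
  assumes "finite P" "P \<noteq> {}" "\<forall>y\<in>P. F y \<le> G y + c"
  shows "Min (F ` P) \<le> Min (G ` P) + c"
proof -
  have "Min (G ` P) \<in> G ` P" using Min_in[of "G ` P"] assms by auto
  then obtain y0 where y0: "y0 \<in> P" "Min (G ` P) = G y0" by auto
  have "Min (F ` P) \<le> F y0" using assms y0 by auto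
  moreover have "F y0 \<le> G y0 + c" using assms y0 by auto
  ultimately show ?thesis using y0 by linarith
qed

lemma small_eps:
  fixes x K :: real
  assumes "\<forall>\<delta>. 0 < \<delta> \<and> \<delta> < 1 \<longrightarrow> x \<le> \<delta> * K" "0 \<le> K"
  shows "x \<le> 0"
proof (rule ccontr)
  assume "\<not> x \<le> 0"
  then have x: "x > 0" by simp
  define \<delta> where "\<delta> = min (1/2) (x / (2 * K + 2))"
  have d: "0 < \<delta>" "\<delta> < 1" using x assms(2) by (auto simp: \<delta>_def)
  have "\<delta> * K \<le> x / (2 * K + 2) * K" using assms(2) by (intro mult_right_mono) (auto simp: \<delta>_def)
  also have "\<dots> = x * (K / (2 * K + 2))" by simp
  also have "\<dots> < x * 1"
  proof (rule mult_strict_left_mono)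
    show "K / (2 * K + 2) < 1" using assms(2) by (simp add: divide_less_eq)
  qed (use x in simp)
  finally show False using assms(1) d by force
qed

locale scheme =
  fixes M :: "'a::euclidean_space set set" and I :: "'a set" and \<epsilon> :: real
    and S :: "'a set" and f g :: "'a \<Rightarrow> real"
  assumes cm: "conforming_mesh M" and IN: "I \<subseteq> mesh_nodes M" and epos: "0 < \<epsilon>"
    and Sfin: "finite S" and Ssph: "S \<subseteq> sphere 0 1" and Ssym: "\<forall>v\<in>S. - v \<in> S" and Sne: "S \<noteq> {}"
begin

abbreviation "N \<equiv> mesh_nodes M"

definition Wp :: "'a \<Rightarrow> ('a \<Rightarrow> real) \<Rightarrow> bool" where
  "Wp y lam \<longleftrightarrow> (\<forall>n. 0 \<le> lam n) \<and> sum lam N \<le> 1 \<and>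
     ((sum lam N = 1 \<and> y = (\<Sum>n\<in>N. lam n *\<^sub>R n)) \<or> (\<forall>n. lam n = 0)) \<and>
     (\<forall>u\<in>P1 M. u y = (\<Sum>n\<in>N. lam n * u n))"

definition wt :: "'a \<Rightarrow> 'a \<Rightarrow> real" where
  "wt y = (SOME lam. Wp y lam)"

lemma wt: "(\<forall>n. 0 \<le> wt y n) \<and> sum (wt y) N \<le> 1 \<and>
     ((sum (wt y) N = 1 \<and> y = (\<Sum>n\<in>N. wt y n *\<^sub>R n)) \<or> (\<forall>n. wt y n = 0)) \<and>
     (\<forall>u\<in>P1 M. u y = (\<Sum>n\<in>N. wt y n * u n))"
proof -
  have ex: "\<exists>lam. Wp y lam" using weights[OF cm, of y] unfolding Wp_def by blast
  have "Wp y (wt y)" unfolding wt_def using ex by (rule someI_ex)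
  then show ?thesis unfolding Wp_def .
qed

lemma wt_nonneg: "0 \<le> wt y n" using wt by blast
lemma wt_sum: "sum (wt y) N \<le> 1" using wt by blast
lemma wt_sum_nonneg: "0 \<le> sum (wt y) N" by (simp add: sum_nonneg wt_nonneg)

lemma finN: "finite N" using mesh_fin[OF cm] by blast

definition E :: "('a \<Rightarrow> real) \<Rightarrow> 'a \<Rightarrow> real" where
  "E a y = (\<Sum>n\<in>N. wt y n * a n)"

lemma E_P1: "u \<in> P1 M \<Longrightarrow> E u y = u y"
  unfolding E_def using wt by metis

lemma E_cong: "\<forall>n\<in>N. a n = b n \<Longrightarrow> E a y = E b y"
  unfolding E_def by (intro sum.cong) auto

lemma E_node: assumes "n \<in> N" shows "E a n = a n"
proof -
  obtain u where u: "u \<in> P1 M" "\<forall>n\<in>N. u n = a n" using interp_exists[OF cm] by blast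
  have "E a n = E u n" using u by (intro E_cong) auto
  also have "\<dots> = u n" using E_P1 u by blast
  finally show ?thesis using u assms by auto
qed

lemma E_le:
  assumes "\<forall>n\<in>N. a n \<le> b n + c" "0 \<le> c"
  shows "E a y \<le> E b y + c"
proof -
  have "E a y \<le> (\<Sum>n\<in>N. wt y n * (b n + c))"
    unfolding E_def using assms wt_nonneg by (intro sum_mono mult_left_mono) auto
  also have "\<dots> = E b y + c * sum (wt y) N"
    unfolding E_def by (simp add: algebra_simps sum.distrib sum_distrib_left)
  also have "\<dots> \<le> E b y + c" using wt_sum assms(2) wt_sum_nonneg
    by (simp add: mult_left_le)
  finally show ?thesis .
qed

lemma E_affine: "E (\<lambda>n. t * a n - c) y = t * E a y - c * sum (wt y) N"
  unfolding E_def by (simp add: algebra_simps sum_subtractf sum_distrib_left)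

lemma E_diff: "E a y - E b y = E (\<lambda>n. a n - b n) y"
  unfolding E_def by (simp add: algebra_simps sum_subtractf)

definition P :: "'a \<Rightarrow> 'a set" where "P z = stencil \<epsilon> S z"

lemma P_fin: "finite (P z)" using Sfin by (simp add: P_def stencil_def)
lemma P_ne: "P z \<noteq> {}" by (simp add: P_def stencil_def)
lemma z_in_P: "z \<in> P z" by (simp add: P_def stencil_def)
lemma v_in_P: "v \<in> S \<Longrightarrow> z + \<epsilon> *\<^sub>R v \<in> P z" unfolding P_def stencil_def by blast

definition Mx :: "('a \<Rightarrow> real) \<Rightarrow> 'a \<Rightarrow> real" where "Mx a z = Max (E a ` P z)"
definition Mn :: "('a \<Rightarrow> real) \<Rightarrow> 'a \<Rightarrow> real" where "Mn a z = Min (E a ` P z)"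
definition Lop :: "('a \<Rightarrow> real) \<Rightarrow> 'a \<Rightarrow> real" where "Lop a z = 2 * a z - Mx a z - Mn a z"
definition Phi :: "('a \<Rightarrow> real) \<Rightarrow> 'a \<Rightarrow> real" where
  "Phi a z = (if z \<in> I then (\<epsilon>\<^sup>2 * f z + Mx a z + Mn a z) / 2 else g z)"
definition sol :: "('a \<Rightarrow> real) \<Rightarrow> bool" where
  "sol a \<longleftrightarrow> (\<forall>z\<in>I. Lop a z = \<epsilon>\<^sup>2 * f z) \<and> (\<forall>z\<in>N - I. a z = g z)"

lemma Mx_ge: "y \<in> P z \<Longrightarrow> E a y \<le> Mx a z"
  unfolding Mx_def using P_fin by auto
lemma Mn_le: "y \<in> P z \<Longrightarrow> Mn a z \<le> E a y"
  unfolding Mn_def using P_fin by auto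
lemma Mx_in: "\<exists>y\<in>P z. Mx a z = E a y"
proof -
  have "Max (E a ` P z) \<in> E a ` P z" using Max_in[of "E a ` P z"] P_fin P_ne by auto
  then show ?thesis unfolding Mx_def by auto
qed
lemma Mn_in: "\<exists>y\<in>P z. Mn a z = E a y"
proof -
  have "Min (E a ` P z) \<in> E a ` P z" using Min_in[of "E a ` P z"] P_fin P_ne by auto
  then show ?thesis unfolding Mn_def by auto
qed

lemma MxMn_le:
  assumes "\<forall>n\<in>N. a n \<le> b n + c" "0 \<le> c"
  shows "Mx a z \<le> Mx b z + c" "Mn a z \<le> Mn b z + c"
  using Max_le_shift[OF P_fin[of z] P_ne[of z], where F="E a" and G="E b" and c=c]
    Min_le_shift[OF P_fin[of z] P_ne[of z], where F="E a" and G="E b" and c=c]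
    E_le[OF assms] unfolding Mx_def Mn_def by auto

lemma Phi_mono:
  assumes "\<forall>n\<in>N. a n \<le> b n"
  shows "Phi a z \<le> Phi b z"
  using MxMn_le[of a b 0 z] assms unfolding Phi_def by auto

lemma Phi_lip: "\<bar>Phi a z - Phi b z\<bar> \<le> (\<Sum>n\<in>N. \<bar>a n - b n\<bar>)"
proof -
  define m where "m = (\<Sum>n\<in>N. \<bar>a n - b n\<bar>)"
  have m0: "0 \<le> m" unfolding m_def by (simp add: sum_nonneg)
  have "\<bar>a n - b n\<bar> \<le> m" if "n \<in> N" for n
    unfolding m_def using that finN by (intro member_le_sum) auto
  then have h1: "\<forall>n\<in>N. a n \<le> b n + m" "\<forall>n\<in>N. b n \<le> a n + m" by force+
  show ?thesis using MxMn_le[OF h1(1) m0, of z] MxMn_le[OF h1(2) m0, of z]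
    unfolding Phi_def m_def[symmetric] by (auto simp: abs_le_iff field_simps)
qed

lemma Phi_fix_sol: "(\<forall>z\<in>N. Phi a z = a z) \<Longrightarrow> sol a"
proof -
  assume h: "\<forall>z\<in>N. Phi a z = a z"
  have "Lop a z = \<epsilon>\<^sup>2 * f z" if "z \<in> I" for z
  proof -
    have "z \<in> N" using that IN by auto
    then have "Phi a z = a z" using h by blast
    then have "a z = (\<epsilon>\<^sup>2 * f z + Mx a z + Mn a z) / 2" using that unfolding Phi_def by simp
    then show ?thesis unfolding Lop_def by simp
  qed
  moreover have "a z = g z" if "z \<in> N - I" for z using h that unfolding Phi_def by auto
  ultimately show ?thesis unfolding sol_def by blast
qed

end

lemma W_lemma:
  fixes w d :: "'b \<Rightarrow> real"
  assumes "finite X" "\<forall>n\<in>X. 0 \<le> w n" "sum w X \<le> 1" "\<forall>n\<in>X. d n \<le> m" "0 < m"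
    "(\<Sum>n\<in>X. w n * d n) = m"
  shows "sum w X = 1 \<and> (\<forall>n\<in>X. 0 < w n \<longrightarrow> d n = m)"
proof -
  have nn: "\<forall>n\<in>X. 0 \<le> w n * (m - d n)" using assms by auto
  have e: "(\<Sum>n\<in>X. w n * (m - d n)) = m * sum w X - m"
  proof -
    have "(\<Sum>n\<in>X. w n * (m - d n)) = (\<Sum>n\<in>X. m * w n) - (\<Sum>n\<in>X. w n * d n)"
      by (simp add: right_diff_distrib sum_subtractf mult.commute)
    also have "(\<Sum>n\<in>X. m * w n) = m * sum w X" by (simp add: sum_distrib_left)
    finally show ?thesis using assms(6) by simp
  qed
  have "m * sum w X \<le> m * 1" using assms(3,5) by (intro mult_left_mono) auto
  then have le: "(\<Sum>n\<in>X. w n * (m - d n)) \<le> 0" using e by linarith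
  have ge: "0 \<le> (\<Sum>n\<in>X. w n * (m - d n))" using nn by (simp add: sum_nonneg)
  have z: "(\<Sum>n\<in>X. w n * (m - d n)) = 0" using le ge by linarith
  have "\<forall>n\<in>X. w n * (m - d n) = 0"
    using sum_nonneg_eq_0_iff[OF assms(1), of "\<lambda>n. w n * (m - d n)"] nn z by simp
  moreover have "m * sum w X = m * 1" using z e by linarith
  then have "sum w X = 1" using assms(5) by simp
  ultimately show ?thesis by (metis eq_iff_diff_eq_0 less_irrefl mult_eq_0_iff)
qed

context scheme begin

lemma strict_comp:
  assumes "\<forall>z\<in>N - I. a z \<le> b z" "\<forall>z\<in>I. Lop a z < Lop b z"
  shows "\<forall>n\<in>N. a n \<le> b n"
proof (rule ccontr)
  assume "\<not> (\<forall>n\<in>N. a n \<le> b n)"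
  then obtain n0 where n0: "n0 \<in> N" "b n0 < a n0" by auto
  define m where "m = Max ((\<lambda>n. a n - b n) ` N)"
  have mge: "\<forall>n\<in>N. a n - b n \<le> m" unfolding m_def using finN by auto
  have "m \<in> (\<lambda>n. a n - b n) ` N" unfolding m_def using finN n0 by (intro Max_in) auto
  then obtain z where z: "z \<in> N" "a z - b z = m" by auto
  have mpos: "0 < m" using mge n0 by force
  have zI: "z \<in> I" using z mpos assms(1) by force
  have h: "\<forall>n\<in>N. a n \<le> b n + m" using mge by force
  have "Mx a z \<le> Mx b z + m" "Mn a z \<le> Mn b z + m" using MxMn_le[OF h] mpos by auto
  then have "Lop b z \<le> Lop a z" unfolding Lop_def using z by linarith
  then show False using assms(2) zI by force
qed

lemma Lop_scale:
  assumes "0 < t" "0 \<le> c"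
  shows "Lop (\<lambda>n. t * a n - c) z \<le> t * Lop a z"
proof -
  define a' where "a' = (\<lambda>n. t * a n - c)"
  have Ea: "t * E a y - c \<le> E a' y" for y
  proof -
    have "E a' y = t * E a y - c * sum (wt y) N" unfolding a'_def by (rule E_affine)
    moreover have "c * sum (wt y) N \<le> c" using assms(2) wt_sum wt_sum_nonneg by (simp add: mult_left_le)
    ultimately show ?thesis by linarith
  qed
  obtain y1 where y1: "y1 \<in> P z" "Mx a z = E a y1" using Mx_in by blast
  obtain y2 where y2: "y2 \<in> P z" "Mn a' z = E a' y2" using Mn_in by blast
  have "t * Mx a z - c \<le> Mx a' z"
  proof -
    have "t * Mx a z = t * E a y1" using y1 by simp
    then show ?thesis using Ea[of y1] Mx_ge[OF y1(1), of a'] by linarith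
  qed
  moreover have "t * Mn a z - c \<le> Mn a' z"
  proof -
    have "t * Mn a z \<le> t * E a y2" using Mn_le[OF y2(1)] assms(1) by simp
    then show ?thesis using Ea[of y2] y2 by linarith
  qed
  ultimately show ?thesis unfolding Lop_def a'_def[symmetric] by (simp add: a'_def algebra_simps)
qed

lemma comp_t:
  assumes "sol a" "sol b" "0 < t" "\<forall>z\<in>I. (t - 1) * f z < 0"
  shows "\<forall>n\<in>N. t * a n - \<bar>t - 1\<bar> * (\<Sum>n\<in>N. \<bar>g n\<bar>) \<le> b n"
proof -
  define G where "G = (\<Sum>n\<in>N. \<bar>g n\<bar>)"
  have G0: "0 \<le> G" unfolding G_def by (simp add: sum_nonneg)
  have gG: "\<bar>g n\<bar> \<le> G" if "n \<in> N" for n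
    unfolding G_def using that finN by (intro member_le_sum) auto
  define a' where "a' = (\<lambda>n. t * a n - \<bar>t - 1\<bar> * G)"
  have "\<forall>n\<in>N. a' n \<le> b n"
  proof (rule strict_comp)
    show "\<forall>z\<in>N - I. a' z \<le> b z"
    proof
      fix z assume z: "z \<in> N - I"
      have "a z = g z" "b z = g z" using assms(1,2) z unfolding sol_def by auto
      moreover have "(t - 1) * g z \<le> \<bar>t - 1\<bar> * G"
      proof -
        have "(t - 1) * g z \<le> \<bar>(t - 1) * g z\<bar>" by (rule abs_ge_self)
        also have "\<dots> = \<bar>t - 1\<bar> * \<bar>g z\<bar>" by (rule abs_mult)
        also have "\<dots> \<le> \<bar>t - 1\<bar> * G" using gG[of z] z by (intro mult_left_mono) auto
        finally show ?thesis .
      qed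
      ultimately show "a' z \<le> b z" unfolding a'_def by (simp add: algebra_simps)
    qed
    show "\<forall>z\<in>I. Lop a' z < Lop b z"
    proof
      fix z assume z: "z \<in> I"
      have "Lop a' z \<le> t * Lop a z" unfolding a'_def using Lop_scale assms(3) G0 by simp
      also have "\<dots> = t * (\<epsilon>\<^sup>2 * f z)" using assms(1) z unfolding sol_def by simp
      also have "\<dots> < \<epsilon>\<^sup>2 * f z"
      proof -
        have "0 < \<epsilon>\<^sup>2" using epos by simp
        then have "\<epsilon>\<^sup>2 * ((t - 1) * f z) < 0" using assms(4) z by (simp add: mult_pos_neg)
        then show ?thesis by (simp add: algebra_simps)
      qed
      also have "\<dots> = Lop b z" using assms(2) z unfolding sol_def by simp
      finally show "Lop a' z < Lop b z" .
    qed
  qed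
  then show ?thesis unfolding a'_def G_def .
qed

lemma uniq_strict:
  assumes "sol a" "sol b" "(\<forall>z\<in>I. 0 < f z) \<or> (\<forall>z\<in>I. f z < 0)"
  shows "\<forall>n\<in>N. a n \<le> b n"
proof
  fix n assume n: "n \<in> N"
  define G where "G = (\<Sum>n\<in>N. \<bar>g n\<bar>)"
  have G0: "0 \<le> G" unfolding G_def by (simp add: sum_nonneg)
  have "\<forall>\<delta>. 0 < \<delta> \<and> \<delta> < 1 \<longrightarrow> a n - b n \<le> \<delta> * (G + \<bar>a n\<bar>)"
  proof (intro allI impI)
    fix \<delta> :: real assume d: "0 < \<delta> \<and> \<delta> < 1"
    show "a n - b n \<le> \<delta> * (G + \<bar>a n\<bar>)"
    proof (cases "\<forall>z\<in>I. 0 < f z")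
      case True
      have "\<forall>z\<in>I. ((1 - \<delta>) - 1) * f z < 0" using True d by (simp add: mult_pos_pos)
      then have "(1 - \<delta>) * a n - \<bar>(1 - \<delta>) - 1\<bar> * G \<le> b n"
        using comp_t[OF assms(1,2), of "1 - \<delta>"] d n unfolding G_def by auto
      then have "a n - b n \<le> \<delta> * (G + a n)" using d by (simp add: algebra_simps)
      also have "\<dots> \<le> \<delta> * (G + \<bar>a n\<bar>)" using d by (intro mult_left_mono) auto
      finally show ?thesis .
    next
      case False
      then have neg: "\<forall>z\<in>I. f z < 0" using assms(3) by blast
      have "\<forall>z\<in>I. ((1 + \<delta>) - 1) * f z < 0" using neg d by (simp add: mult_pos_neg)
      then have "(1 + \<delta>) * a n - \<bar>(1 + \<delta>) - 1\<bar> * G \<le> b n"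
        using comp_t[OF assms(1,2), of "1 + \<delta>"] d n unfolding G_def by auto
      then have "a n - b n \<le> \<delta> * (G - a n) + 0" using d by (simp add: algebra_simps)
      then have "a n - b n \<le> \<delta> * (G - a n)" by simp
      moreover have "\<delta> * (G - a n) \<le> \<delta> * (G + \<bar>a n\<bar>)" using d by (intro mult_left_mono) auto
      ultimately show ?thesis by linarith
    qed
  qed
  then have "a n - b n \<le> 0" using small_eps G0 by (meson abs_ge_zero add_nonneg_nonneg)
  then show "a n \<le> b n" by simp
qed

end

context scheme begin

lemma uniq_zero:
  assumes sa: "sol a" and sb: "sol b" and f0: "\<forall>z\<in>I. f z = 0"
    and m1: "\<forall>S'. S' \<subseteq> I \<and> S' \<noteq> {} \<longrightarrow>
       (\<exists>z\<in>S'. \<exists>z'\<in>N - S'. z' = z \<or> (\<exists>v\<in>S. 0 < wt (z + \<epsilon> *\<^sub>R v) z'))"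
  shows "\<forall>n\<in>N. a n \<le> b n"
proof (rule ccontr)
  assume "\<not> (\<forall>n\<in>N. a n \<le> b n)"
  then obtain n0 where n0: "n0 \<in> N" "b n0 < a n0" by auto
  define d where "d n = a n - b n" for n
  define m where "m = Max (d ` N)"
  have mge: "\<forall>n\<in>N. d n \<le> m" unfolding m_def using finN by auto
  have "m \<in> d ` N" unfolding m_def using finN n0 by (intro Max_in) auto
  then obtain z0 where z0: "z0 \<in> N" "d z0 = m" by auto
  have mpos: "0 < m" using mge n0 unfolding d_def by force
  define Es where "Es = {n\<in>N. d n = m}"
  have Esfin: "finite Es" unfolding Es_def using finN by auto
  have Esne: "Es \<noteq> {}" unfolding Es_def using z0 by auto
  have EsI: "Es \<subseteq> I"
  proof
    fix n assume n: "n \<in> Es"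
    show "n \<in> I"
    proof (rule ccontr)
      assume "n \<notin> I"
      then have "a n = g n" "b n = g n" using sa sb n unfolding sol_def Es_def by auto
      then show False using n mpos unfolding Es_def d_def by auto
    qed
  qed
  define U where "U = Max (a ` Es)"
  have Uge: "\<forall>n\<in>Es. a n \<le> U" unfolding U_def using Esfin by auto
  have "U \<in> a ` Es" unfolding U_def using Esfin Esne by (intro Max_in) auto
  then obtain e0 where e0: "e0 \<in> Es" "a e0 = U" by auto
  define Fs where "Fs = {n\<in>Es. a n = U}"
  have FsI: "Fs \<subseteq> I" using EsI unfolding Fs_def by auto
  have Fsne: "Fs \<noteq> {}" using e0 unfolding Fs_def by auto
  obtain z z' where z: "z \<in> Fs" and z': "z' \<in> N - Fs" and zz: "z' = z \<or> (\<exists>v\<in>S. 0 < wt (z + \<epsilon> *\<^sub>R v) z')"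
  proof -
    have "\<exists>z\<in>Fs. \<exists>z'\<in>N - Fs. z' = z \<or> (\<exists>v\<in>S. 0 < wt (z + \<epsilon> *\<^sub>R v) z')"
      using m1 FsI Fsne by simp
    then show ?thesis using that by blast
  qed
  have "z' \<noteq> z" using z z' by auto
  then obtain v where v: "v \<in> S" "0 < wt (z + \<epsilon> *\<^sub>R v) z'" using zz by auto
  define y where "y = z + \<epsilon> *\<^sub>R v"
  have yP: "y \<in> P z" unfolding y_def using v_in_P[OF v(1)] .
  have zI: "z \<in> I" using z FsI by auto
  have zN: "z \<in> N" using zI IN by auto
  have zE: "d z = m" "a z = U" using z unfolding Fs_def Es_def by auto
  have La: "Lop a z = 0" using sa zI f0 unfolding sol_def by auto
  have Lb: "Lop b z = 0" using sb zI f0 unfolding sol_def by auto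
  have h: "\<forall>n\<in>N. a n \<le> b n + m" using mge unfolding d_def by force
  have Eh: "E a y' \<le> E b y' + m" for y' using E_le[OF h] mpos by auto
  obtain y1 where y1: "y1 \<in> P z" "Mx a z = E a y1" using Mx_in by blast
  obtain y2 where y2: "y2 \<in> P z" "Mn b z = E b y2" using Mn_in by blast
  have i1: "E b y1 \<le> Mx b z" using Mx_ge[OF y1(1)] .
  have i2: "Mn a z \<le> E a y2" using Mn_le[OF y2(1)] .
  have az: "a z = b z + m" using zE unfolding d_def by simp
  have sum_eq: "Mx a z + Mn a z = Mx b z + Mn b z + 2 * m"
    using La Lb az unfolding Lop_def by linarith
  have eq1: "E a y1 = E b y1 + m" using Eh[of y1] Eh[of y2] i1 i2 y1 y2 sum_eq by linarith
  have eqMx: "Mx a z = Mx b z + m" "Mn a z = Mn b z + m"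
    using Eh[of y1] Eh[of y2] i1 i2 y1 y2 sum_eq by linarith+
  have Ed: "E d y' = E a y' - E b y'" for y' unfolding d_def using E_diff by simp
  have W1: "sum (wt y1) N = 1 \<and> (\<forall>n\<in>N. 0 < wt y1 n \<longrightarrow> d n = m)"
    using W_lemma[OF finN, of "wt y1" d m] wt_nonneg wt_sum mge mpos eq1 Ed[of y1]
    unfolding E_def by auto
  have "E a y1 \<le> U"
  proof -
    have "E a y1 = (\<Sum>n\<in>N. wt y1 n * a n)" unfolding E_def ..
    also have "\<dots> \<le> (\<Sum>n\<in>N. wt y1 n * U)"
    proof (rule sum_mono)
      fix n assume n: "n \<in> N"
      show "wt y1 n * a n \<le> wt y1 n * U"
      proof (cases "wt y1 n = 0")
        case False
        then have "0 < wt y1 n" using wt_nonneg[of y1 n] by linarith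
        then have "n \<in> Es" using W1 n unfolding Es_def by auto
        then show ?thesis using Uge wt_nonneg[of y1 n] by (simp add: mult_left_mono)
      qed simp
    qed
    also have "\<dots> = U" using W1 by (simp add: sum_distrib_right[symmetric])
    finally show ?thesis .
  qed
  then have "Mx a z \<le> a z" using y1 zE by simp
  moreover have "a z \<le> Mx a z" using Mx_ge[OF z_in_P[of z], of a] E_node[OF zN] by simp
  ultimately have Mxa: "Mx a z = a z" by simp
  have Mna: "Mn a z = a z" using La Mxa unfolding Lop_def by simp
  have Eay: "E a y = U"
    using Mx_ge[OF yP, of a] Mn_le[OF yP, of a] Mxa Mna zE by simp
  have Eby: "E b y = b z"
  proof -
    have "Mx b z = b z" "Mn b z = b z" using eqMx Mxa Mna az by simp_all
    then show ?thesis using Mx_ge[OF yP, of b] Mn_le[OF yP, of b] by simp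
  qed
  have "E d y = m" using Ed[of y] Eay Eby zE az by simp
  then have W2: "sum (wt y) N = 1 \<and> (\<forall>n\<in>N. 0 < wt y n \<longrightarrow> d n = m)"
    using W_lemma[OF finN, of "wt y" d m] wt_nonneg wt_sum mge mpos
    unfolding E_def by auto
  have nn: "\<forall>n\<in>N. 0 \<le> wt y n * (U - a n)"
  proof
    fix n assume n: "n \<in> N"
    show "0 \<le> wt y n * (U - a n)"
    proof (cases "wt y n = 0")
      case False
      then have "0 < wt y n" using wt_nonneg[of y n] by linarith
      then have "n \<in> Es" using W2 n unfolding Es_def by auto
      then show ?thesis using Uge wt_nonneg[of y n] by simp
    qed simp
  qed
  have "(\<Sum>n\<in>N. wt y n * (U - a n)) = U * sum (wt y) N - E a y"
  proof -
    have "(\<Sum>n\<in>N. wt y n * (U - a n)) = (\<Sum>n\<in>N. U * wt y n) - (\<Sum>n\<in>N. wt y n * a n)"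
      by (simp add: right_diff_distrib sum_subtractf mult.commute left_diff_distrib)
    also have "(\<Sum>n\<in>N. U * wt y n) = U * sum (wt y) N" by (simp add: sum_distrib_left)
    finally show ?thesis unfolding E_def .
  qed
  also have "\<dots> = 0" using W2 Eay by simp
  finally have "(\<Sum>n\<in>N. wt y n * (U - a n)) = 0" .
  then have "\<forall>n\<in>N. wt y n * (U - a n) = 0"
    using sum_nonneg_eq_0_iff[OF finN, of "\<lambda>n. wt y n * (U - a n)"] nn by simp
  then have "a z' = U" using z' v(2) unfolding y_def by auto
  moreover have "d z' = m" using W2 z' v(2) unfolding y_def by auto
  ultimately have "z' \<in> Fs" using z' unfolding Fs_def Es_def by auto
  then show False using z' by auto
qed

end

lemma jensen_sq:
  fixes X :: "'a::real_inner set"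
  assumes "finite X" "\<forall>n\<in>X. 0 \<le> w n" "sum w X = 1"
  shows "(norm (\<Sum>n\<in>X. w n *\<^sub>R n))\<^sup>2 \<le> (\<Sum>n\<in>X. w n * (norm n)\<^sup>2)"
proof -
  define y where "y = (\<Sum>n\<in>X. w n *\<^sub>R n)"
  have "0 \<le> (\<Sum>n\<in>X. w n * (norm (n - y))\<^sup>2)" using assms(2) by (simp add: sum_nonneg)
  also have "\<dots> = (\<Sum>n\<in>X. w n * (norm n)\<^sup>2 - 2 * (w n * (n \<bullet> y)) + w n * (y \<bullet> y))"
    by (intro sum.cong) (auto simp: power2_norm_eq_inner inner_diff_left inner_diff_right inner_commute algebra_simps)
  also have "\<dots> = (\<Sum>n\<in>X. w n * (norm n)\<^sup>2) - 2 * (\<Sum>n\<in>X. w n * (n \<bullet> y)) + (\<Sum>n\<in>X. w n) * (y \<bullet> y)"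
    by (simp add: sum.distrib sum_subtractf sum_distrib_left sum_distrib_right)
  also have "(\<Sum>n\<in>X. w n * (n \<bullet> y)) = y \<bullet> y"
    unfolding y_def by (simp add: inner_sum_left)
  finally have "0 \<le> (\<Sum>n\<in>X. w n * (norm n)\<^sup>2) - y \<bullet> y" using assms(3) by simp
  then show ?thesis unfolding y_def[symmetric] by (simp add: power2_norm_eq_inner)
qed

lemma sum_abs_tendsto:
  assumes "finite X" "\<forall>n\<in>X. (\<lambda>k. l k n) \<longlonglongrightarrow> (a n :: real)"
  shows "(\<lambda>k. \<Sum>n\<in>X. \<bar>l k n - a n\<bar>) \<longlonglongrightarrow> 0"
proof (rule tendsto_null_sum)
  fix n assume "n \<in> X"
  then have "(\<lambda>k. l k n - a n) \<longlonglongrightarrow> 0" using assms(2) LIM_zero by blast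
  then show "(\<lambda>k. \<bar>l k n - a n\<bar>) \<longlonglongrightarrow> 0" by (rule tendsto_rabs_zero)
qed

context scheme begin

lemma limit_fix:
  assumes lim: "\<forall>n\<in>N. (\<lambda>k. l k n) \<longlonglongrightarrow> a n" and st: "\<forall>k. \<forall>z\<in>N. l (Suc k) z = Phi (l k) z"
  shows "\<forall>z\<in>N. Phi a z = a z"
proof
  fix z assume z: "z \<in> N"
  have s: "(\<lambda>k. \<Sum>n\<in>N. \<bar>l k n - a n\<bar>) \<longlonglongrightarrow> 0" using sum_abs_tendsto[OF finN lim] .
  have "(\<lambda>k. Phi (l k) z - Phi a z) \<longlonglongrightarrow> 0"
    by (rule Lim_null_comparison[OF _ s]) (use Phi_lip in simp)
  then have t1: "(\<lambda>k. Phi (l k) z) \<longlonglongrightarrow> Phi a z" by (rule LIM_zero_cancel)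
  have "(\<lambda>k. l k z) \<longlonglongrightarrow> a z" using lim z by blast
  then have "(\<lambda>k. l (Suc k) z) \<longlonglongrightarrow> a z" by (rule LIMSEQ_Suc)
  then have "(\<lambda>k. Phi (l k) z) \<longlonglongrightarrow> a z" using st z by simp
  then show "Phi a z = a z" using t1 LIMSEQ_unique by blast
qed

lemma iter_up:
  assumes sub: "\<forall>n\<in>N. s n \<le> Phi s n" and bd: "\<forall>n\<in>N. s n \<le> B n" and sup: "\<forall>n\<in>N. Phi B n \<le> B n"
  shows "\<exists>a. sol a \<and> (\<forall>n\<in>N. (\<lambda>k. (Phi ^^ k) s n) \<longlonglongrightarrow> a n) \<and> (\<forall>k. \<forall>n\<in>N. (Phi ^^ k) s n \<le> a n)"
proof -
  define l where "l k = (Phi ^^ k) s" for k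
  have inc: "\<forall>n\<in>N. l k n \<le> l (Suc k) n" for k
  proof (induction k)
    case 0 then show ?case using sub by (simp add: l_def)
  next
    case (Suc k)
    then show ?case unfolding l_def using Phi_mono by simp
  qed
  have bnd: "\<forall>n\<in>N. l k n \<le> B n" for k
  proof (induction k)
    case 0 then show ?case using bd by (simp add: l_def)
  next
    case (Suc k)
    have "\<forall>n\<in>N. Phi (l k) n \<le> Phi B n" using Suc Phi_mono by blast
    then show ?case using sup unfolding l_def by force
  qed
  define a where "a n = (SUP k. l k n)" for n
  have lim: "\<forall>n\<in>N. (\<lambda>k. l k n) \<longlonglongrightarrow> a n"
  proof
    fix n assume n: "n \<in> N"
    have "incseq (\<lambda>k. l k n)" using inc n by (intro incseq_SucI) auto
    moreover have "bdd_above (range (\<lambda>k. l k n))" using bnd n by (intro bdd_aboveI[of _ "B n"]) auto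
    ultimately show "(\<lambda>k. l k n) \<longlonglongrightarrow> a n" unfolding a_def by (intro LIMSEQ_incseq_SUP)
  qed
  have "\<forall>z\<in>N. Phi a z = a z"
    by (rule limit_fix[OF lim]) (simp add: l_def)
  then have "sol a" by (rule Phi_fix_sol)
  moreover have "\<forall>k. \<forall>n\<in>N. l k n \<le> a n"
  proof (intro allI ballI)
    fix k n assume n: "n \<in> N"
    have "incseq (\<lambda>k. l k n)" using inc n by (intro incseq_SucI) auto
    then show "l k n \<le> a n" using lim n by (intro incseq_le) auto
  qed
  ultimately show ?thesis using lim unfolding l_def by blast
qed

lemma iter_down:
  assumes sup: "\<forall>n\<in>N. Phi s n \<le> s n" and bd: "\<forall>n\<in>N. B n \<le> s n" and sub: "\<forall>n\<in>N. B n \<le> Phi B n"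
  shows "\<exists>a. sol a \<and> (\<forall>n\<in>N. (\<lambda>k. (Phi ^^ k) s n) \<longlonglongrightarrow> a n)"
proof -
  define l where "l k = (Phi ^^ k) s" for k
  have dec: "\<forall>n\<in>N. l (Suc k) n \<le> l k n" for k
  proof (induction k)
    case 0 then show ?case using sup by (simp add: l_def)
  next
    case (Suc k)
    then show ?case unfolding l_def using Phi_mono by simp
  qed
  have bnd: "\<forall>n\<in>N. B n \<le> l k n" for k
  proof (induction k)
    case 0 then show ?case using bd by (simp add: l_def)
  next
    case (Suc k)
    have "\<forall>n\<in>N. Phi B n \<le> Phi (l k) n" using Suc Phi_mono by blast
    then show ?case using sub unfolding l_def by force
  qed
  define a where "a n = (INF k. l k n)" for n
  have lim: "\<forall>n\<in>N. (\<lambda>k. l k n) \<longlonglongrightarrow> a n"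
  proof
    fix n assume n: "n \<in> N"
    have "decseq (\<lambda>k. l k n)" using dec n by (intro decseq_SucI) auto
    moreover have "bdd_below (range (\<lambda>k. l k n))" using bnd n by (intro bdd_belowI[of _ "B n"]) auto
    ultimately show "(\<lambda>k. l k n) \<longlonglongrightarrow> a n" unfolding a_def by (intro LIMSEQ_decseq_INF)
  qed
  have "\<forall>z\<in>N. Phi a z = a z"
    by (rule limit_fix[OF lim]) (simp add: l_def)
  then have "sol a" by (rule Phi_fix_sol)
  then show ?thesis using lim unfolding l_def by blast
qed

end

lemma norm_exp:
  fixes z v :: "'a::real_inner"
  assumes "norm v = 1"
  shows "(norm (z + e *\<^sub>R v))\<^sup>2 = (norm z)\<^sup>2 + 2 * e * (v \<bullet> z) + e\<^sup>2"
proof -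
  have vv: "v \<bullet> v = 1" using assms by (metis norm_eq_sqrt_inner real_sqrt_eq_1_iff)
  show ?thesis
    unfolding power2_norm_eq_inner
    by (simp add: inner_add_left inner_add_right inner_commute vv algebra_simps power2_eq_square)
qed

context scheme begin

lemma normS: "v \<in> S \<Longrightarrow> norm v = 1" using Ssph by auto

lemma good_dir: "\<exists>v\<in>S. 0 \<le> v \<bullet> z"
proof -
  obtain v1 where v1: "v1 \<in> S" using Sne by auto
  show ?thesis
  proof (cases "0 \<le> v1 \<bullet> z")
    case True then show ?thesis using v1 by blast
  next
    case False
    then have "0 \<le> (- v1) \<bullet> z" by simp
    then show ?thesis using v1 Ssym by blast
  qed
qed

lemma P_cases: "y \<in> P z \<Longrightarrow> y = z \<or> (\<exists>v\<in>S. y = z + \<epsilon> *\<^sub>R v)"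
  unfolding P_def stencil_def by auto

lemma sub_super:
  assumes bc: "\<forall>n\<in>N - I. u0 n = g n"
  shows "\<exists>s. (\<forall>n\<in>N. s n \<le> Phi s n) \<and> (\<forall>n\<in>N. s n \<le> u0 n)"
    and "\<exists>s. (\<forall>n\<in>N. Phi s n \<le> s n) \<and> (\<forall>n\<in>N. u0 n \<le> s n)"
proof -
  have finI: "finite I" using finN IN finite_subset by blast
  define K where "K = (\<Sum>z\<in>I. \<bar>f z\<bar>)"
  have K0: "0 \<le> K" unfolding K_def by (simp add: sum_nonneg)
  have Kf: "\<bar>f z\<bar> \<le> K" if "z \<in> I" for z
    unfolding K_def using finI that by (intro member_le_sum) auto
  define R where "R = N \<union> (\<Union>z\<in>I. P z)"
  have finR: "finite R" unfolding R_def using finN finI P_fin by auto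
  define Q where "Q = (\<Sum>x\<in>R. (norm x)\<^sup>2)"
  have Qx: "(norm x)\<^sup>2 \<le> Q" if "x \<in> R" for x
    unfolding Q_def using finR that by (intro member_le_sum) auto
  have KQ: "K * (norm x)\<^sup>2 \<le> K * Q" if "x \<in> R" for x
    using Qx[OF that] K0 by (rule mult_left_mono)
  define G where "G = (\<Sum>n\<in>N. \<bar>g n\<bar> + \<bar>u0 n\<bar>)"
  have Gn: "\<bar>g n\<bar> + \<bar>u0 n\<bar> \<le> G" if "n \<in> N" for n
    unfolding G_def using finN that by (intro member_le_sum) auto
  define L where "L = K * Q + G"
  have NR: "n \<in> N \<Longrightarrow> n \<in> R" for n unfolding R_def by auto
  have PR: "z \<in> I \<Longrightarrow> y \<in> P z \<Longrightarrow> y \<in> R" for z y unfolding R_def by auto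
  have wcases: "(sum (wt y) N = 1 \<and> y = (\<Sum>n\<in>N. wt y n *\<^sub>R n)) \<or> (\<forall>n. wt y n = 0)" for y
    using wt by blast
  have jen: "(norm y)\<^sup>2 \<le> (\<Sum>n\<in>N. wt y n * (norm n)\<^sup>2)"
    if "sum (wt y) N = 1" "y = (\<Sum>n\<in>N. wt y n *\<^sub>R n)" for y
    using jensen_sq[OF finN, of "wt y"] that wt_nonneg by simp
  have expand: "K * (norm (z + \<epsilon> *\<^sub>R v))\<^sup>2 = K * (norm z)\<^sup>2 + 2 * K * \<epsilon> * (v \<bullet> z) + K * \<epsilon>\<^sup>2"
    if "v \<in> S" for v z
    using norm_exp[OF normS[OF that], of z \<epsilon>] by (simp add: algebra_simps)
  have e2: "0 < \<epsilon>\<^sup>2" using epos by simp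
  show "\<exists>s. (\<forall>n\<in>N. s n \<le> Phi s n) \<and> (\<forall>n\<in>N. s n \<le> u0 n)"
  proof -
    define r where "r y = K * (norm y)\<^sup>2 - L" for y :: 'a
    define s where "s n = (if n \<in> I then r n else g n)" for n
    have sr: "r n \<le> s n" if "n \<in> N" for n
    proof (cases "n \<in> I")
      case False
      have "r n \<le> K * Q - L" using KQ[OF NR[OF that]] unfolding r_def by simp
      moreover have "- G \<le> g n" using Gn[OF that] by linarith
      ultimately show ?thesis using False unfolding s_def L_def by simp
    qed (simp add: s_def)
    have Es: "r y \<le> E s y" if "z \<in> I" "y \<in> P z" for z y
    proof -
      have yR: "y \<in> R" using PR that by blast
      consider "sum (wt y) N = 1" "y = (\<Sum>n\<in>N. wt y n *\<^sub>R n)" | "\<forall>n. wt y n = 0" using wcases by blast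
      then show ?thesis
      proof cases
        case 1
        have "r y = K * (norm y)\<^sup>2 - L" unfolding r_def ..
        also have "\<dots> \<le> K * (\<Sum>n\<in>N. wt y n * (norm n)\<^sup>2) - L"
          using jen[OF 1] K0 by (simp add: mult_left_mono)
        also have "\<dots> = (\<Sum>n\<in>N. wt y n * r n)"
        proof -
          have "(\<Sum>n\<in>N. wt y n * L) = L" using 1(1) by (simp add: sum_distrib_right[symmetric])
          moreover have "(\<Sum>n\<in>N. wt y n * (K * (norm n)\<^sup>2)) = K * (\<Sum>n\<in>N. wt y n * (norm n)\<^sup>2)"
            by (simp add: sum_distrib_left algebra_simps)
          ultimately show ?thesis unfolding r_def by (simp add: right_diff_distrib sum_subtractf)
        qed
        also have "\<dots> \<le> E s y" unfolding E_def
          using sr wt_nonneg by (intro sum_mono mult_left_mono) auto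
        finally show ?thesis .
      next
        case 2
        have "E s y = 0" unfolding E_def using 2 by simp
        moreover have "r y \<le> 0" using KQ[OF yR] unfolding r_def L_def using Gn finN
          by (smt (verit, best) G_def abs_ge_zero sum_nonneg)
        ultimately show ?thesis by simp
      qed
    qed
    have key: "2 * r z + K * \<epsilon>\<^sup>2 \<le> Mx s z + Mn s z" if z: "z \<in> I" for z
    proof -
      have zN: "z \<in> N" using z IN by auto
      have Esz: "E s z = r z" using E_node[OF zN] z by (simp add: s_def)
      have rexp: "r (z + \<epsilon> *\<^sub>R v) = r z + 2 * K * \<epsilon> * (v \<bullet> z) + K * \<epsilon>\<^sup>2" if "v \<in> S" for v
        using expand[OF that, of z] unfolding r_def by simp
      obtain y0 where y0: "y0 \<in> P z" "Mn s z = E s y0" using Mn_in by blast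
      from P_cases[OF y0(1)] show ?thesis
      proof
        assume "y0 = z"
        then have mn: "Mn s z = r z" using y0 Esz by simp
        obtain v where v: "v \<in> S" "0 \<le> v \<bullet> z" using good_dir by blast
        have "r (z + \<epsilon> *\<^sub>R v) \<le> Mx s z"
          using Es[OF z v_in_P[OF v(1), of z]] Mx_ge[OF v_in_P[OF v(1), of z], of s] by linarith
        moreover have "0 \<le> 2 * K * \<epsilon> * (v \<bullet> z)" using K0 epos v(2) by simp
        ultimately show ?thesis using rexp[OF v(1)] mn by linarith
      next
        assume "\<exists>v\<in>S. y0 = z + \<epsilon> *\<^sub>R v"
        then obtain v where v: "v \<in> S" "y0 = z + \<epsilon> *\<^sub>R v" by blast
        have mv: "- v \<in> S" using Ssym v by blast
        have "r y0 \<le> Mn s z" using Es[OF z y0(1)] y0 by simp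
        moreover have "r (z + \<epsilon> *\<^sub>R (- v)) \<le> Mx s z"
          using Es[OF z v_in_P[OF mv, of z]] Mx_ge[OF v_in_P[OF mv, of z], of s] by linarith
        moreover have "0 \<le> K * \<epsilon>\<^sup>2" using K0 by simp
        ultimately show ?thesis using rexp[OF v(1)] rexp[OF mv] v(2) by simp
      qed
    qed
    have "\<forall>n\<in>N. s n \<le> Phi s n"
    proof
      fix n assume n: "n \<in> N"
      show "s n \<le> Phi s n"
      proof (cases "n \<in> I")
        case True
        have "0 \<le> \<epsilon>\<^sup>2 * (f n + K)" using Kf[OF True] e2 by (intro mult_nonneg_nonneg) auto
        then have "0 \<le> \<epsilon>\<^sup>2 * f n + K * \<epsilon>\<^sup>2" by (simp add: algebra_simps)
        then show ?thesis using key[OF True] True unfolding Phi_def s_def by simp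
      qed (simp add: Phi_def s_def)
    qed
    moreover have "\<forall>n\<in>N. s n \<le> u0 n"
    proof
      fix n assume n: "n \<in> N"
      show "s n \<le> u0 n"
      proof (cases "n \<in> I")
        case True
        have "r n \<le> K * Q - L" using KQ[OF NR[OF n]] unfolding r_def by simp
        moreover have "- G \<le> u0 n" using Gn[OF n] by linarith
        ultimately show ?thesis using True unfolding s_def L_def by simp
      qed (use bc n in \<open>simp add: s_def\<close>)
    qed
    ultimately show ?thesis by blast
  qed
  show "\<exists>s. (\<forall>n\<in>N. Phi s n \<le> s n) \<and> (\<forall>n\<in>N. u0 n \<le> s n)"
  proof -
    define r where "r y = L - K * (norm y)\<^sup>2" for y :: 'a
    define s where "s n = (if n \<in> I then r n else g n)" for n
    have sr: "s n \<le> r n" if "n \<in> N" for n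
    proof (cases "n \<in> I")
      case False
      have "L - K * Q \<le> r n" using KQ[OF NR[OF that]] unfolding r_def by simp
      moreover have "g n \<le> G" using Gn[OF that] by linarith
      ultimately show ?thesis using False unfolding s_def L_def by simp
    qed (simp add: s_def)
    have Es: "E s y \<le> r y" if "z \<in> I" "y \<in> P z" for z y
    proof -
      have yR: "y \<in> R" using PR that by blast
      consider "sum (wt y) N = 1" "y = (\<Sum>n\<in>N. wt y n *\<^sub>R n)" | "\<forall>n. wt y n = 0" using wcases by blast
      then show ?thesis
      proof cases
        case 1
        have "E s y \<le> (\<Sum>n\<in>N. wt y n * r n)" unfolding E_def
          using sr wt_nonneg by (intro sum_mono mult_left_mono) auto
        also have "\<dots> = L - K * (\<Sum>n\<in>N. wt y n * (norm n)\<^sup>2)"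
        proof -
          have "(\<Sum>n\<in>N. wt y n * L) = L" using 1(1) by (simp add: sum_distrib_right[symmetric])
          moreover have "(\<Sum>n\<in>N. wt y n * (K * (norm n)\<^sup>2)) = K * (\<Sum>n\<in>N. wt y n * (norm n)\<^sup>2)"
            by (simp add: sum_distrib_left algebra_simps)
          ultimately show ?thesis unfolding r_def by (simp add: right_diff_distrib sum_subtractf)
        qed
        also have "\<dots> \<le> L - K * (norm y)\<^sup>2"
          using jen[OF 1] K0 by (simp add: mult_left_mono)
        finally show ?thesis unfolding r_def .
      next
        case 2
        have "E s y = 0" unfolding E_def using 2 by simp
        moreover have "0 \<le> r y" using KQ[OF yR] unfolding r_def L_def using Gn finN
          by (smt (verit, best) G_def abs_ge_zero sum_nonneg)
        ultimately show ?thesis by simp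
      qed
    qed
    have key: "Mx s z + Mn s z \<le> 2 * r z - K * \<epsilon>\<^sup>2" if z: "z \<in> I" for z
    proof -
      have zN: "z \<in> N" using z IN by auto
      have Esz: "E s z = r z" using E_node[OF zN] z by (simp add: s_def)
      have rexp: "r (z + \<epsilon> *\<^sub>R v) = r z - 2 * K * \<epsilon> * (v \<bullet> z) - K * \<epsilon>\<^sup>2" if "v \<in> S" for v
        using expand[OF that, of z] unfolding r_def by simp
      obtain y0 where y0: "y0 \<in> P z" "Mx s z = E s y0" using Mx_in by blast
      from P_cases[OF y0(1)] show ?thesis
      proof
        assume "y0 = z"
        then have mx: "Mx s z = r z" using y0 Esz by simp
        obtain v where v: "v \<in> S" "0 \<le> v \<bullet> z" using good_dir by blast
        have "Mn s z \<le> r (z + \<epsilon> *\<^sub>R v)"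
          using Es[OF z v_in_P[OF v(1), of z]] Mn_le[OF v_in_P[OF v(1), of z], of s] by linarith
        moreover have "0 \<le> 2 * K * \<epsilon> * (v \<bullet> z)" using K0 epos v(2) by simp
        ultimately show ?thesis using rexp[OF v(1)] mx by linarith
      next
        assume "\<exists>v\<in>S. y0 = z + \<epsilon> *\<^sub>R v"
        then obtain v where v: "v \<in> S" "y0 = z + \<epsilon> *\<^sub>R v" by blast
        have mv: "- v \<in> S" using Ssym v by blast
        have "Mx s z \<le> r y0" using Es[OF z y0(1)] y0 by simp
        moreover have "Mn s z \<le> r (z + \<epsilon> *\<^sub>R (- v))"
          using Es[OF z v_in_P[OF mv, of z]] Mn_le[OF v_in_P[OF mv, of z], of s] by linarith
        moreover have "0 \<le> K * \<epsilon>\<^sup>2" using K0 by simp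
        ultimately show ?thesis using rexp[OF v(1)] rexp[OF mv] v(2) by simp
      qed
    qed
    have "\<forall>n\<in>N. Phi s n \<le> s n"
    proof
      fix n assume n: "n \<in> N"
      show "Phi s n \<le> s n"
      proof (cases "n \<in> I")
        case True
        have "0 \<le> \<epsilon>\<^sup>2 * (K - f n)" using Kf[OF True] e2 by (intro mult_nonneg_nonneg) auto
        then have "\<epsilon>\<^sup>2 * f n \<le> K * \<epsilon>\<^sup>2" by (simp add: algebra_simps)
        then show ?thesis using key[OF True] True unfolding Phi_def s_def by simp
      qed (simp add: Phi_def s_def)
    qed
    moreover have "\<forall>n\<in>N. u0 n \<le> s n"
    proof
      fix n assume n: "n \<in> N"
      show "u0 n \<le> s n"
      proof (cases "n \<in> I")
        case True
        have "L - K * Q \<le> r n" using KQ[OF NR[OF n]] unfolding r_def by simp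
        moreover have "u0 n \<le> G" using Gn[OF n] by linarith
        ultimately show ?thesis using True unfolding s_def L_def by simp
      qed (use bc n in \<open>simp add: s_def\<close>)
    qed
    ultimately show ?thesis by blast
  qed
qed

end

context scheme begin

lemma converge:
  assumes uniq: "\<forall>a b. sol a \<and> sol b \<longrightarrow> (\<forall>n\<in>N. a n \<le> b n)"
    and u0bc: "\<forall>n\<in>N - I. u 0 n = g n"
    and step: "\<forall>k. \<forall>n\<in>N. u (Suc k) n = Phi (u k) n"
  shows "\<exists>a. sol a \<and> (\<forall>n\<in>N. (\<lambda>k. u k n) \<longlonglongrightarrow> a n)"
proof -
  obtain s where s: "\<forall>n\<in>N. s n \<le> Phi s n" "\<forall>n\<in>N. s n \<le> u 0 n"
    using sub_super(1)[OF u0bc] by blast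
  obtain Sp where Sp: "\<forall>n\<in>N. Phi Sp n \<le> Sp n" "\<forall>n\<in>N. u 0 n \<le> Sp n"
    using sub_super(2)[OF u0bc] by blast
  have sSp: "\<forall>n\<in>N. s n \<le> Sp n" using s(2) Sp(2) by force
  obtain a1 where a1: "sol a1" "\<forall>n\<in>N. (\<lambda>k. (Phi ^^ k) s n) \<longlonglongrightarrow> a1 n"
    using iter_up[OF s(1) sSp Sp(1)] by blast
  obtain a2 where a2: "sol a2" "\<forall>n\<in>N. (\<lambda>k. (Phi ^^ k) Sp n) \<longlonglongrightarrow> a2 n"
    using iter_down[OF Sp(1) sSp s(1)] by blast
  have e1: "\<forall>n\<in>N. a1 n \<le> a2 n" using uniq a1(1) a2(1) by blast
  have e2: "\<forall>n\<in>N. a2 n \<le> a1 n" using uniq a1(1) a2(1) by blast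
  have eq: "\<forall>n\<in>N. a2 n = a1 n" using e1 e2 by (meson order_antisym)
  have sand: "\<forall>n\<in>N. (Phi ^^ k) s n \<le> u k n \<and> u k n \<le> (Phi ^^ k) Sp n" for k
  proof (induction k)
    case 0 then show ?case using s(2) Sp(2) by simp
  next
    case (Suc k)
    have h1: "\<forall>n\<in>N. (Phi ^^ k) s n \<le> u k n" "\<forall>n\<in>N. u k n \<le> (Phi ^^ k) Sp n" using Suc by auto
    show ?case
    proof
      fix n assume n: "n \<in> N"
      have "Phi ((Phi ^^ k) s) n \<le> Phi (u k) n" using Phi_mono[OF h1(1)] .
      moreover have "Phi (u k) n \<le> Phi ((Phi ^^ k) Sp) n" using Phi_mono[OF h1(2)] .
      ultimately show "(Phi ^^ Suc k) s n \<le> u (Suc k) n \<and> u (Suc k) n \<le> (Phi ^^ Suc k) Sp n"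
        using step n by simp
    qed
  qed
  have "\<forall>n\<in>N. (\<lambda>k. u k n) \<longlonglongrightarrow> a1 n"
  proof
    fix n assume n: "n \<in> N"
    show "(\<lambda>k. u k n) \<longlonglongrightarrow> a1 n"
    proof (rule tendsto_sandwich)
      show "\<forall>\<^sub>F k in sequentially. (Phi ^^ k) s n \<le> u k n" using sand n by simp
      show "\<forall>\<^sub>F k in sequentially. u k n \<le> (Phi ^^ k) Sp n" using sand n by simp
      show "(\<lambda>k. (Phi ^^ k) s n) \<longlonglongrightarrow> a1 n" using a1 n by blast
      show "(\<lambda>k. (Phi ^^ k) Sp n) \<longlonglongrightarrow> a1 n" using a2 n eq by auto
    qed
  qed
  then show ?thesis using a1(1) by blast
qed

lemma E_dist: "\<bar>E a y - E b y\<bar> \<le> (\<Sum>n\<in>N. \<bar>a n - b n\<bar>)"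
proof -
  define m where "m = (\<Sum>n\<in>N. \<bar>a n - b n\<bar>)"
  have m0: "0 \<le> m" unfolding m_def by (simp add: sum_nonneg)
  have "\<bar>a n - b n\<bar> \<le> m" if "n \<in> N" for n
    unfolding m_def using that finN by (intro member_le_sum) auto
  then have h1: "\<forall>n\<in>N. a n \<le> b n + m" "\<forall>n\<in>N. b n \<le> a n + m" by force+
  show ?thesis using E_le[OF h1(1) m0, of y] E_le[OF h1(2) m0, of y]
    unfolding m_def[symmetric] by (auto simp: abs_le_iff)
qed

lemma hat_wt:
  assumes "z' \<in> N"
  shows "hat M z' y = wt y z'"
proof -
  have h: "hat M z' \<in> P1 M" "\<forall>n\<in>N. hat M z' n = (if n = z' then 1 else 0)"
    using hat_char[OF cm] by blast+
  have "hat M z' y = E (hat M z') y" using E_P1[OF h(1)] by simp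
  also have "\<dots> = (\<Sum>n\<in>N. wt y n * (if n = z' then 1 else 0))"
    unfolding E_def using h(2) by (intro sum.cong) auto
  also have "\<dots> = wt y z'" using finN assms by (simp add: if_distrib cong: if_cong)
  finally show ?thesis .
qed

lemma P1_img: "u \<in> P1 M \<Longrightarrow> u ` stencil \<epsilon> S z = E u ` P z"
  unfolding P_def using E_P1 by auto

end

context scheme begin

lemma disc_iff:
  assumes "I = interior_nodes \<Omega> M \<epsilon>"
  shows "discrete_solution \<Omega> M \<epsilon> S f g w \<longleftrightarrow> w \<in> P1 M \<and> sol w"
proof (cases "w \<in> P1 M")
  case True
  have d: "disc_inf_lap \<epsilon> S w z = Lop w z / \<epsilon>\<^sup>2" for z
    unfolding disc_inf_lap_def Lop_def Mx_def Mn_def P1_img[OF True] ..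
  have e2: "\<epsilon>\<^sup>2 \<noteq> 0" using epos by simp
  have "(disc_inf_lap \<epsilon> S w z = f z) \<longleftrightarrow> (Lop w z = \<epsilon>\<^sup>2 * f z)" for z
    unfolding d using e2 by (auto simp: field_simps)
  moreover have "boundary_nodes \<Omega> M \<epsilon> = N - I" unfolding boundary_nodes_def assms ..
  ultimately show ?thesis unfolding discrete_solution_def sol_def assms[symmetric] using True by simp
next
  case False then show ?thesis unfolding discrete_solution_def by simp
qed

lemma sol_cong:
  assumes "sol a" "\<forall>n\<in>N. w n = a n"
  shows "sol w"
proof -
  have "E w = E a" using E_cong assms(2) by blast
  then have "Mx w = Mx a" "Mn w = Mn a" unfolding Mx_def Mn_def by auto
  moreover have "\<forall>z\<in>I. w z = a z" using assms(2) IN by auto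
  ultimately show ?thesis using assms unfolding sol_def Lop_def by auto
qed

end

lemma mesh_size_pos:
  assumes cm: "conforming_mesh (M :: 'a::euclidean_space set set)"
  shows "0 < mesh_size M"
proof -
  obtain T where T: "T \<in> M" using cm unfolding conforming_mesh_def by auto
  have sv: "finite T" "card T = DIM('a) + 1" using cm T unfolding conforming_mesh_def simplex_vertices_def by auto
  then have "T \<noteq> {}" by auto
  then obtain x where x: "x \<in> T" by auto
  have "card (T - {x}) = DIM('a)" using sv x by simp
  then have "T - {x} \<noteq> {}" using DIM_positive[where 'a='a] by (metis card.empty less_irrefl)
  then obtain y where y: "y \<in> T" "y \<noteq> x" by auto
  have bd: "bounded (convex hull T)" using sv(1) by (simp add: finite_imp_bounded_convex_hull)
  have "0 < dist x y" using y by simp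
  also have "\<dots> \<le> diameter (convex hull T)"
    using diameter_bounded_bound[OF bd] x y hull_subset[of T convex] by blast
  also have "\<dots> \<le> mesh_size M"
    unfolding mesh_size_def using T cm unfolding conforming_mesh_def by (intro Max_ge) auto
  finally show ?thesis .
qed

theorem theorem6p1:
  fixes \<Omega> :: "'a::euclidean_space set"
    and M :: "'a set set"
    and \<epsilon> \<theta> :: real
    and S :: "'a set"
    and f g :: "'a \<Rightarrow> real"
    and gt :: "real \<Rightarrow> 'a \<Rightarrow> real"
    and u :: "nat \<Rightarrow> 'a \<Rightarrow> real"
  assumes dom: "open \<Omega>" "connected \<Omega>" "bounded \<Omega>" "\<Omega> \<noteq> {}" "continuous_boundary \<Omega>"
    and mesh: "conforming_mesh M"
      "inner_set \<Omega> (mesh_size M) \<subseteq> mesh_domain M" "mesh_domain M \<subseteq> \<Omega>"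
    and params: "mesh_size M \<le> \<epsilon>" "\<epsilon> \<le> diameter \<Omega>" "0 < \<theta>" "\<theta> \<le> 1" "theta_net S \<theta>"
    and RHS1: "continuous_on \<Omega> f" "bounded (f ` \<Omega>)"
    and RHS2: "(SUP x\<in>\<Omega>. f x) < 0 \<or> (INF x\<in>\<Omega>. f x) > 0 \<or> (\<forall>x\<in>\<Omega>. f x = 0)"
    and BC1: "continuous_on (frontier \<Omega>) g"
    and BC2: "\<forall>e>0. continuous_on (closure \<Omega>) (gt e)"
      "\<forall>\<alpha>\<in>{0..1}. holder_on \<alpha> (frontier \<Omega>) g \<longrightarrow>
          (\<forall>e>0. holder_on \<alpha> (closure \<Omega>) (gt e)) \<and>
          (\<exists>C. \<forall>e>0. \<forall>x\<in>frontier \<Omega>. \<bar>g x - gt e x\<bar> \<le> C * e powr \<alpha>)"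
    and M1: "(\<forall>x\<in>\<Omega>. f x = 0) \<longrightarrow> cond_M1 \<Omega> M \<epsilon> S"
    and init: "u 0 \<in> P1 M" "\<forall>z\<in>boundary_nodes \<Omega> M \<epsilon>. u 0 z = gt \<epsilon> z"
    and iter: "\<forall>n. u (Suc n) \<in> P1 M \<and>
       (\<forall>z\<in>interior_nodes \<Omega> M \<epsilon>. u (Suc n) z =
          (\<epsilon>\<^sup>2 * f z + Max (u n ` stencil \<epsilon> S z) + Min (u n ` stencil \<epsilon> S z)) / 2) \<and>
       (\<forall>z\<in>boundary_nodes \<Omega> M \<epsilon>. u (Suc n) z = gt \<epsilon> z)"
  shows "(\<exists>w. discrete_solution \<Omega> M \<epsilon> S f (gt \<epsilon>) w) \<and>
         (\<forall>w. discrete_solution \<Omega> M \<epsilon> S f (gt \<epsilon>) w \<longrightarrow> uniform_limit UNIV u w sequentially)"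
proof -
  define I where "I = interior_nodes \<Omega> M \<epsilon>"
  have epos: "0 < \<epsilon>" using mesh_size_pos[OF mesh(1)] params(1) by linarith
  have tn: "finite S" "S \<subseteq> sphere 0 1" "\<forall>v\<in>S. - v \<in> S" "\<forall>v\<in>sphere 0 1. \<exists>vt\<in>S. norm (v - vt) \<le> \<theta>"
    using params(5) unfolding theta_net_def by auto
  have Sne: "S \<noteq> {}"
  proof -
    obtain b :: 'a where "b \<in> Basis" using nonempty_Basis by blast
    then have "b \<in> sphere 0 1" by simp
    then show ?thesis using tn(4) by blast
  qed
  have IN: "I \<subseteq> mesh_nodes M" unfolding I_def interior_nodes_def by auto
  interpret sc: scheme M I \<epsilon> S f "gt \<epsilon>"
    using mesh(1) IN epos tn Sne by unfold_locales auto
  have IO: "I \<subseteq> \<Omega>" unfolding I_def interior_nodes_def inner_set_def by auto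
  have bn: "boundary_nodes \<Omega> M \<epsilon> = sc.N - I" unfolding boundary_nodes_def I_def ..
  have uP1: "u k \<in> P1 M" for k using init(1) iter by (cases k) auto
  have step: "\<forall>k. \<forall>n\<in>sc.N. u (Suc k) n = sc.Phi (u k) n"
  proof (intro allI ballI)
    fix k n assume n: "n \<in> sc.N"
    show "u (Suc k) n = sc.Phi (u k) n"
    proof (cases "n \<in> I")
      case True
      have "u (Suc k) n = (\<epsilon>\<^sup>2 * f n + Max (u k ` stencil \<epsilon> S n) + Min (u k ` stencil \<epsilon> S n)) / 2"
        using iter True unfolding I_def by blast
      also have "\<dots> = sc.Phi (u k) n"
        using True unfolding sc.Phi_def sc.Mx_def sc.Mn_def sc.P1_img[OF uP1[of k]] by simp
      finally show ?thesis .
    next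
      case False
      then show ?thesis using iter n bn unfolding sc.Phi_def by auto
    qed
  qed
  have u0bc: "\<forall>n\<in>sc.N - I. u 0 n = gt \<epsilon> n" using init(2) bn by auto
  have uniq: "\<forall>a b. sc.sol a \<and> sc.sol b \<longrightarrow> (\<forall>n\<in>sc.N. a n \<le> b n)"
  proof (intro allI impI)
    fix a b assume ab: "sc.sol a \<and> sc.sol b"
    consider "(SUP x\<in>\<Omega>. f x) < 0" | "(INF x\<in>\<Omega>. f x) > 0" | "\<forall>x\<in>\<Omega>. f x = 0" using RHS2 by blast
    then show "\<forall>n\<in>sc.N. a n \<le> b n"
    proof cases
      case 1
      have "\<forall>z\<in>I. f z < 0"
      proof
        fix z assume "z \<in> I"
        then have "z \<in> \<Omega>" using IO by auto
        then have "f z \<le> (SUP x\<in>\<Omega>. f x)"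
          using RHS1(2) by (intro cSUP_upper) (auto intro: bounded_imp_bdd_above)
        then show "f z < 0" using 1 by linarith
      qed
      then show ?thesis using sc.uniq_strict ab by blast
    next
      case 2
      have "\<forall>z\<in>I. 0 < f z"
      proof
        fix z assume "z \<in> I"
        then have "z \<in> \<Omega>" using IO by auto
        then have "(INF x\<in>\<Omega>. f x) \<le> f z"
          using RHS1(2) by (intro cINF_lower) (auto intro: bounded_imp_bdd_below)
        then show "0 < f z" using 2 by linarith
      qed
      then show ?thesis using sc.uniq_strict ab by blast
    next
      case 3
      have f0: "\<forall>z\<in>I. f z = 0" using 3 IO by auto
      have c: "cond_M1 \<Omega> M \<epsilon> S" using M1 3 by blast
      have m1: "\<forall>S'. S' \<subseteq> I \<and> S' \<noteq> {} \<longrightarrow>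
         (\<exists>z\<in>S'. \<exists>z'\<in>sc.N - S'. z' = z \<or> (\<exists>v\<in>S. 0 < sc.wt (z + \<epsilon> *\<^sub>R v) z'))"
      proof (intro allI impI)
        fix S' assume S': "S' \<subseteq> I \<and> S' \<noteq> {}"
        then obtain z z' where zz: "z \<in> S'" "z' \<in> sc.N - S'" "z' \<in> ext_stencil M \<epsilon> S z"
          using c unfolding cond_M1_def I_def by blast
        have "z' = z \<or> (\<exists>v\<in>S. 0 < sc.wt (z + \<epsilon> *\<^sub>R v) z')"
          using zz(3) sc.hat_wt zz(2) unfolding ext_stencil_def by auto
        then show "\<exists>z\<in>S'. \<exists>z'\<in>sc.N - S'. z' = z \<or> (\<exists>v\<in>S. 0 < sc.wt (z + \<epsilon> *\<^sub>R v) z')"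
          using zz by blast
      qed
      show ?thesis using sc.uniq_zero[OF _ _ f0 m1] ab by blast
    qed
  qed
  obtain a where a: "sc.sol a" "\<forall>n\<in>sc.N. (\<lambda>k. u k n) \<longlonglongrightarrow> a n"
    using sc.converge[OF uniq u0bc step] by blast
  have ex: "\<exists>w. discrete_solution \<Omega> M \<epsilon> S f (gt \<epsilon>) w"
  proof -
    obtain w where w: "w \<in> P1 M" "\<forall>n\<in>sc.N. w n = a n" using interp_exists[OF mesh(1)] by blast
    have "sc.sol w" using sc.sol_cong[OF a(1) w(2)] .
    then show ?thesis using sc.disc_iff[OF I_def] w(1) by blast
  qed
  have ul: "uniform_limit UNIV u w sequentially" if ds: "discrete_solution \<Omega> M \<epsilon> S f (gt \<epsilon>) w" for w
  proof -
    have w: "w \<in> P1 M" "sc.sol w" using sc.disc_iff[OF I_def] ds by auto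
    have "\<forall>n\<in>sc.N. w n = a n" using uniq w(2) a(1) by (meson order_antisym)
    then have lim: "\<forall>n\<in>sc.N. (\<lambda>k. u k n) \<longlonglongrightarrow> w n" using a(2) by auto
    have s: "(\<lambda>k. \<Sum>n\<in>sc.N. \<bar>u k n - w n\<bar>) \<longlonglongrightarrow> 0" using sum_abs_tendsto[OF sc.finN lim] .
    show ?thesis unfolding uniform_limit_iff
    proof (intro allI impI)
      fix e :: real assume e: "0 < e"
      have "\<forall>\<^sub>F k in sequentially. \<bar>(\<Sum>n\<in>sc.N. \<bar>u k n - w n\<bar>) - 0\<bar> < e"
        using s e unfolding tendsto_iff dist_real_def by blast
      then show "\<forall>\<^sub>F k in sequentially. \<forall>x\<in>UNIV. dist (u k x) (w x) < e"
      proof (rule eventually_mono)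
        fix k assume k: "\<bar>(\<Sum>n\<in>sc.N. \<bar>u k n - w n\<bar>) - 0\<bar> < e"
        show "\<forall>x\<in>UNIV. dist (u k x) (w x) < e"
        proof
          fix x :: 'a
          have "dist (u k x) (w x) = \<bar>sc.E (u k) x - sc.E w x\<bar>"
            using sc.E_P1[OF uP1[of k]] sc.E_P1[OF w(1)] by (simp add: dist_real_def)
          also have "\<dots> \<le> (\<Sum>n\<in>sc.N. \<bar>u k n - w n\<bar>)" by (rule sc.E_dist)
          finally show "dist (u k x) (w x) < e" using k by simp
        qed
      qed
    qed
  qed
  show ?thesis using ex ul by blast
qed


end
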